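(* For every centric $s$-vector $s$ and centric $y$-vector $y$, $$W_s=\mathrm{aff}(W_s)\cap W\qquad\text{and}\qquad W_y=\mathrm{aff}(W_y)\cap W,$$ where $\mathrm{aff}$ denotes affine hull.
   Context: Let $A\in\mathbb R^{m\times n}$ have full column rank $n\le m$ and $b\in\mathbb R^m$ be such that $\{x:Ax\le b\}$ is bounded with nonempty interior. For $w\in\mathbb R^m_{++}$ the weighted center of $w$ is the unique $(x,y,s)$ with $Ax+s=b$, $s>0$, $A^\top y=0$, $\mathrm{Diag}(s)y=w$ ($s$-vector $s$, $y$-vector $y$). $W=\{w\in\mathbb R^m:w>0,\ e^\top w=1\}$. Centric $s$-/$y$-vectors are the $s$-/$y$-vectors of weighted centers of elements of $W$. For centric $s$, $W_s=\{w\in W:$ $s$-vector of $w$ is $s\}$; for centric $y$, $W_y=\{w\in W:$ $y$-vector of $w$ is $y\}$. *)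

theory Defs
  imports "HOL-Analysis.Analysis"
begin

definition polytope_set :: "real^'n^'m \<Rightarrow> real^'m \<Rightarrow> (real^'n) set" where
  "polytope_set A b = {x. \<forall>i. (A *v x) $ i \<le> b $ i}"

definition is_weighted_center ::
  "real^'n^'m \<Rightarrow> real^'m \<Rightarrow> real^'m \<Rightarrow> real^'n \<Rightarrow> real^'m \<Rightarrow> real^'m \<Rightarrow> bool" where
  "is_weighted_center A b w x y s \<longleftrightarrow>
     A *v x + s = b \<and> (\<forall>i. s $ i > 0) \<and> transpose A *v y = 0 \<and> (\<forall>i. s $ i * y $ i = w $ i)"

definition Wset :: "(real^'m) set" where
  "Wset = {w. (\<forall>i. w $ i > 0) \<and> (\<Sum>i\<in>UNIV. w $ i) = 1}"

definition s_vector_of :: "real^'n^'m \<Rightarrow> real^'m \<Rightarrow> real^'m \<Rightarrow> real^'m \<Rightarrow> bool" where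
  "s_vector_of A b w s \<longleftrightarrow> (\<exists>x y. is_weighted_center A b w x y s)"

definition y_vector_of :: "real^'n^'m \<Rightarrow> real^'m \<Rightarrow> real^'m \<Rightarrow> real^'m \<Rightarrow> bool" where
  "y_vector_of A b w y \<longleftrightarrow> (\<exists>x s. is_weighted_center A b w x y s)"

definition centric_s :: "real^'n^'m \<Rightarrow> real^'m \<Rightarrow> real^'m \<Rightarrow> bool" where
  "centric_s A b s \<longleftrightarrow> (\<exists>w\<in>Wset. s_vector_of A b w s)"

definition centric_y :: "real^'n^'m \<Rightarrow> real^'m \<Rightarrow> real^'m \<Rightarrow> bool" where
  "centric_y A b y \<longleftrightarrow> (\<exists>w\<in>Wset. y_vector_of A b w y)"

definition W_s :: "real^'n^'m \<Rightarrow> real^'m \<Rightarrow> real^'m \<Rightarrow> (real^'m) set" where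
  "W_s A b s = {w\<in>Wset. s_vector_of A b w s}"

definition W_y :: "real^'n^'m \<Rightarrow> real^'m \<Rightarrow> real^'m \<Rightarrow> (real^'m) set" where
  "W_y A b y = {w\<in>Wset. y_vector_of A b w y}"

end

theory Submission
  imports Defs
begin

lemma aff_cap_lemma:
  assumes "S = L \<inter> W" "affine L"
  shows "S = affine hull S \<inter> W"
proof -
  have "affine hull S \<subseteq> L" using assms by (intro hull_minimal) auto
  moreover have "S \<subseteq> affine hull S" by (rule hull_subset)
  ultimately show ?thesis using assms(1) by auto
qed

lemma vm_scaleR: "((c::real) *\<^sub>R x) v* (A::real^'n^'m) = c *\<^sub>R (x v* A)"
  by (simp add: vector_matrix_mult_def vec_eq_iff sum_distrib_left algebra_simps)

lemma partS:
  fixes A :: "real^'n^'m" and b :: "real^'m" and s :: "real^'m"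
  assumes "centric_s A b s"
  shows "W_s A b s = affine hull (W_s A b s) \<inter> Wset"
proof (rule aff_cap_lemma)
  let ?L = "{w::real^'m. transpose A *v (\<chi> i. w$i / s$i) = 0}"
  obtain w0 x0 y0 where c: "is_weighted_center A b w0 x0 y0 s"
    using assms unfolding centric_s_def s_vector_of_def by blast
  have spos: "\<And>i. s$i > 0" using c unfolding is_weighted_center_def by auto
  show "W_s A b s = ?L \<inter> Wset"
  proof (intro set_eqI iffI)
    fix w assume "w \<in> W_s A b s"
    then obtain x yy where w: "w \<in> Wset" "is_weighted_center A b w x yy s"
      unfolding W_s_def s_vector_of_def by blast
    have "yy = (\<chi> i. w$i / s$i)"
      using w(2) spos unfolding is_weighted_center_def vec_eq_iff
      by (metis less_irrefl nonzero_mult_div_cancel_left vec_lambda_beta)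
    then show "w \<in> ?L \<inter> Wset" using w unfolding is_weighted_center_def by auto
  next
    fix w assume w: "w \<in> ?L \<inter> Wset"
    have "is_weighted_center A b w x0 (\<chi> i. w$i / s$i) s"
      using c w spos unfolding is_weighted_center_def by (auto simp: less_imp_neq[OF spos, symmetric])
    then show "w \<in> W_s A b s" using w unfolding W_s_def s_vector_of_def by blast
  qed
  show "affine ?L"
    unfolding affine_def
  proof (intro allI impI ballI)
    fix x y :: "real^'m" and u v :: real
    assume x: "x \<in> ?L" and y: "y \<in> ?L" and "u + v = 1"
    have "(\<chi> i. (u *\<^sub>R x + v *\<^sub>R y)$i / s$i) = u *\<^sub>R (\<chi> i. x$i / s$i) + v *\<^sub>R (\<chi> i. y$i / s$i)"
      by (simp add: vec_eq_iff add_divide_distrib)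
    then show "u *\<^sub>R x + v *\<^sub>R y \<in> ?L" using x y
      by (simp add: matrix_vector_right_distrib matrix_vector_mult_scaleR vector_matrix_left_distrib vm_scaleR)
  qed
qed

lemma partY:
  fixes A :: "real^'n^'m" and b :: "real^'m" and y :: "real^'m"
  assumes "centric_y A b y"
  shows "W_y A b y = affine hull (W_y A b y) \<inter> Wset"
proof (rule aff_cap_lemma)
  let ?L = "{w::real^'m. \<exists>x. A *v x + (\<chi> i. w$i / y$i) = b}"
  obtain w0 x0 s0 where w0: "w0 \<in> Wset" and c: "is_weighted_center A b w0 x0 y s0"
    using assms unfolding centric_y_def y_vector_of_def by blast
  have ypos: "\<And>i. y$i > 0"
  proof -
    fix i
    have "s0$i > 0" "s0$i * y$i = w0$i" "w0$i > 0"
      using c w0 unfolding is_weighted_center_def Wset_def by auto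
    then show "y$i > 0" by (metis zero_less_mult_pos)
  qed
  have yA: "transpose A *v y = 0" using c unfolding is_weighted_center_def by auto
  show "W_y A b y = ?L \<inter> Wset"
  proof (intro set_eqI iffI)
    fix w assume "w \<in> W_y A b y"
    then obtain x ss where w: "w \<in> Wset" "is_weighted_center A b w x y ss"
      unfolding W_y_def y_vector_of_def by blast
    have "ss = (\<chi> i. w$i / y$i)"
      using w(2) ypos unfolding is_weighted_center_def vec_eq_iff
      by (metis less_irrefl nonzero_mult_div_cancel_right vec_lambda_beta)
    then show "w \<in> ?L \<inter> Wset" using w unfolding is_weighted_center_def by auto
  next
    fix w assume w: "w \<in> ?L \<inter> Wset"
    then obtain x where x: "A *v x + (\<chi> i. w$i / y$i) = b" by auto
    have "is_weighted_center A b w x y (\<chi> i. w$i / y$i)"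
      using x yA w ypos unfolding is_weighted_center_def Wset_def
      by (auto simp: less_imp_neq[OF ypos, symmetric])
    then show "w \<in> W_y A b y" using w unfolding W_y_def y_vector_of_def by blast
  qed
  show "affine ?L"
    unfolding affine_def
  proof (intro allI impI ballI)
    fix p q :: "real^'m" and u v :: real
    assume p: "p \<in> ?L" and q: "q \<in> ?L" and uv: "u + v = 1"
    obtain x1 where x1: "A *v x1 + (\<chi> i. p$i / y$i) = b" using p by auto
    obtain x2 where x2: "A *v x2 + (\<chi> i. q$i / y$i) = b" using q by auto
    have "(\<chi> i. (u *\<^sub>R p + v *\<^sub>R q)$i / y$i) = u *\<^sub>R (\<chi> i. p$i / y$i) + v *\<^sub>R (\<chi> i. q$i / y$i)"
      by (simp add: vec_eq_iff add_divide_distrib)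
    then have "A *v (u *\<^sub>R x1 + v *\<^sub>R x2) + (\<chi> i. (u *\<^sub>R p + v *\<^sub>R q)$i / y$i)
        = u *\<^sub>R (A *v x1 + (\<chi> i. p$i / y$i)) + v *\<^sub>R (A *v x2 + (\<chi> i. q$i / y$i))"
      by (simp add: matrix_vector_right_distrib matrix_vector_mult_scaleR vector_matrix_left_distrib vm_scaleR algebra_simps)
    also have "\<dots> = b" using x1 x2 uv by (simp add: scaleR_left_distrib[symmetric])
    finally show "u *\<^sub>R p + v *\<^sub>R q \<in> ?L" by blast
  qed
qed

theorem lemmaA4:
  fixes A :: "real^'n^'m" and b :: "real^'m" and s y :: "real^'m"
  assumes "rank A = CARD('n)"
    and "bounded (polytope_set A b)"
    and "interior (polytope_set A b) \<noteq> {}"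
    and "centric_s A b s"
    and "centric_y A b y"
  shows "W_s A b s = affine hull (W_s A b s) \<inter> Wset
     \<and> W_y A b y = affine hull (W_y A b y) \<inter> Wset"
  using partS[OF assms(4)] partY[OF assms(5)] by blast

end
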